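(* Let $q$ be an odd prime power, let $f$ be a planar function on $\mathbb F_{q^2}$ and let $\theta=\theta_0+\theta_1\xi\in\mathbb F_{q^2}^*$ ($\theta_0,\theta_1\in\mathbb F_q$). Assume that for every $c\in\mathbb F_q$, \[\#\{x\in\mathbb F_{q^2}:\theta_1 f_0(x)-\theta_0 f_1(x)=c\}=\begin{cases} q+1, & c\neq 0,\\ 1, & c=0.\end{cases}\] Then the set \[\mathcal U_\theta:=\{(x,t\theta):x\in\mathbb F_{q^2},\ t\in\mathbb F_q\}\cup\{(\infty)\}\] is a unital in $\Pi(f)$. Furthermore, for $a,b\in\mathbb F_{q^2}$ with $b=b_0+b_1\xi$ ($b_0,b_1\in\mathbb F_q$), the line $L_{a,b}$ is a tangent line to $\mathcal U_\theta$ if and only if $b_0\theta_1-b_1\theta_0=0$.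
   Context: A function $f:\mathbb F_{q^2}\to\mathbb F_{q^2}$ is planar if for every $a\neq 0$ the map $x\mapsto f(x+a)-f(x)$ is a bijection. For planar $f$, $\Pi(f)$ is the projective plane with points $(x,y)\in\mathbb F_{q^2}^2$ and $(a)$ for $a\in\mathbb F_{q^2}\cup\{\infty\}$, and lines $L_{a,b}=\{(x,f(x+a)-b):x\in\mathbb F_{q^2}\}\cup\{(a)\}$ ($a,b\in\mathbb F_{q^2}$), $N_a=\{(a,y):y\in\mathbb F_{q^2}\}\cup\{(\infty)\}$ ($a\in\mathbb F_{q^2}$), $L_\infty=\{(a):a\in\mathbb F_{q^2}\cup\{\infty\}\}$, with incidence given by membership. A unital in $\Pi(f)$ is a set of $q^3+1$ points meeting every line in exactly $1$ or $q+1$ points; a line meeting it in exactly one point is a tangent line. A fixed element $\xi\in\mathbb F_{q^2}\setminus\mathbb F_q$ is chosen; every $x\in\mathbb F_{q^2}$ is written uniquely as $x=x_0+x_1\xi$ with $x_0,x_1\in\mathbb F_q$, and $f(x)=f_0(x)+f_1(x)\xi$ with $f_0,f_1:\mathbb F_{q^2}\to\mathbb F_q$. *)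

theory Defs
  imports Main "HOL-Computational_Algebra.Primes"
begin

text \<open>The ambient field 'a plays the role of F_{q^2}; its subfield F_q is the
set of elements fixed by the q-th power (Frobenius) map.\<close>

definition subfield_q :: "nat \<Rightarrow> ('a::field) set" where
  "subfield_q q = {x. x ^ q = x}"

definition coord0 :: "nat \<Rightarrow> 'a::field \<Rightarrow> 'a \<Rightarrow> 'a" where
  "coord0 q \<xi> x = (THE a. a \<in> subfield_q q \<and> (\<exists>b\<in>subfield_q q. x = a + b * \<xi>))"

definition coord1 :: "nat \<Rightarrow> 'a::field \<Rightarrow> 'a \<Rightarrow> 'a" where
  "coord1 q \<xi> x = (THE b. b \<in> subfield_q q \<and> (\<exists>a\<in>subfield_q q. x = a + b * \<xi>))"

definition planar :: "('a::field \<Rightarrow> 'a) \<Rightarrow> bool" where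
  "planar f \<longleftrightarrow> (\<forall>a. a \<noteq> 0 \<longrightarrow> bij (\<lambda>x. f (x + a) - f x))"

datatype 'a point = Aff 'a 'a | Ideal 'a | IdealInf

datatype 'a line = Lab 'a 'a | Nl 'a | Linf

fun incident :: "('a::field \<Rightarrow> 'a) \<Rightarrow> 'a point \<Rightarrow> 'a line \<Rightarrow> bool" where
  "incident f (Aff x y) (Lab a b) = (y = f (x + a) - b)"
| "incident f (Ideal c) (Lab a b) = (c = a)"
| "incident f IdealInf (Lab a b) = False"
| "incident f (Aff x y) (Nl a) = (x = a)"
| "incident f (Ideal c) (Nl a) = False"
| "incident f IdealInf (Nl a) = True"
| "incident f (Aff x y) Linf = False"
| "incident f (Ideal c) Linf = True"
| "incident f IdealInf Linf = True"

definition points_on :: "('a::field \<Rightarrow> 'a) \<Rightarrow> 'a line \<Rightarrow> 'a point set" where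
  "points_on f l = {p. incident f p l}"

definition unital :: "nat \<Rightarrow> ('a::field \<Rightarrow> 'a) \<Rightarrow> 'a point set \<Rightarrow> bool" where
  "unital q f U \<longleftrightarrow> finite U \<and> card U = q ^ 3 + 1 \<and>
     (\<forall>l. card (U \<inter> points_on f l) = 1 \<or> card (U \<inter> points_on f l) = q + 1)"

definition tangent_line :: "('a::field \<Rightarrow> 'a) \<Rightarrow> 'a point set \<Rightarrow> 'a line \<Rightarrow> bool" where
  "tangent_line f U l \<longleftrightarrow> card (U \<inter> points_on f l) = 1"

definition U_theta :: "nat \<Rightarrow> 'a::field \<Rightarrow> 'a point set" where
  "U_theta q \<theta> = {Aff x (t * \<theta>) | x t. t \<in> subfield_q q} \<union> {IdealInf}"

end

theory Submission
  imports Defs "HOL-Number_Theory.Residues" "HOL-Computational_Algebra.Polynomial"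
begin

lemma card_roots_le:
  fixes c :: "'a::field"
  assumes "q \<ge> 2"
  shows "card {x::'a. x ^ q = c * x} \<le> q"
proof -
  let ?P = "monom (1::'a) q - [:0, c:]"
  have coeffq: "coeff ?P q = 1" using assms by (simp add: coeff_pCons split: nat.splits)
  have nz: "?P \<noteq> 0" proof assume "?P = 0" with coeffq show False by simp qed
  have "degree ?P \<le> q"
    by (rule degree_diff_le) (use assms in \<open>auto simp: degree_monom_eq\<close>)
  moreover have "{x. x ^ q = c * x} = {x. poly ?P x = 0}"
    by (auto simp: poly_monom)
  ultimately show ?thesis using card_poly_roots_bound[OF nz] by simp
qed

locale ffq =
  fixes q :: nat and \<xi> :: "'a::{field,finite}"
  assumes qpp: "\<exists>p k. prime p \<and> k > 0 \<and> q = p ^ k"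
    and oddq: "odd q"
    and cardU: "card (UNIV::'a set) = q^2"
    and xi: "\<xi> \<notin> subfield_q q"
begin

abbreviation F :: "'a set" where "F \<equiv> subfield_q q"

lemma q2: "q \<ge> 2"
proof -
  obtain p k where pk: "prime p" "k > 0" "q = p ^ k" using qpp by blast
  have "p \<ge> 2" using pk(1) prime_ge_2_nat by blast
  moreover have "p \<le> p ^ k" using pk(2) \<open>p \<ge> 2\<close>
    by (metis One_nat_def Suc_leI less_le_trans not_le pos2 power_increasing power_one_right)
  ultimately show ?thesis using pk by simp
qed

lemma char_pow: "\<exists>k. q = CHAR('a) ^ k"
proof -
  obtain p k where pk: "prime p" "k > 0" "q = p ^ k" using qpp by blast
  have pc: "prime CHAR('a)"
    by (rule prime_CHAR_semidom[OF finite_imp_CHAR_pos]) simp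
  have "CHAR('a) dvd card (UNIV :: 'a set)" by (rule CHAR_dvd_CARD)
  hence "CHAR('a) dvd p ^ (2*k)" using cardU pk by (simp add: power_mult mult.commute)
  hence "CHAR('a) dvd p" using pc prime_dvd_power by blast
  hence "CHAR('a) = p" using pc pk(1) primes_dvd_imp_eq by blast
  thus ?thesis using pk by blast
qed

lemma frob_add: "(x + y :: 'a) ^ q = x ^ q + y ^ q"
proof -
  obtain k where k: "q = CHAR('a) ^ k" using char_pow by blast
  have pc: "prime CHAR('a)"
    by (rule prime_CHAR_semidom[OF finite_imp_CHAR_pos]) simp
  show ?thesis by (rule freshmans_dream'[OF pc k])
qed

lemma frob_neg: "(- x :: 'a) ^ q = - (x ^ q)"
  using oddq by simp

lemma frob_diff: "(x - y :: 'a) ^ q = x ^ q - y ^ q"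
  using frob_add[of x "-y"] frob_neg[of y] by simp

lemma pow_card: "(x::'a) ^ card (UNIV :: 'a set) = x"
proof (cases "x = 0")
  case False
  have "x * (\<Prod>y\<in>UNIV-{0}. x * y) = x * x ^ (card (UNIV :: 'a set) - 1) * \<Prod>(UNIV-{0})"
    by (simp add: prod.distrib mult_ac)
  also have "x * x ^ (card (UNIV :: 'a set) - 1) = x ^ Suc (card (UNIV :: 'a set) - 1)"
    by (subst power_Suc) auto
  also have "Suc (card (UNIV :: 'a set) - 1) = card (UNIV :: 'a set)"
    using finite_UNIV_card_ge_0[where ?'a = 'a] by simp
  also have "(\<Prod>y\<in>UNIV-{0}. x * y) = (\<Prod>y\<in>UNIV-{0}. y)"
    by (rule prod.reindex_bij_witness[of _ "\<lambda>y. y / x" "\<lambda>y. x * y"]) (use False in auto)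
  finally show ?thesis
    by simp
qed (use finite_UNIV_card_ge_0[where ?'a = 'a] in auto)

lemma pow_qq: "((x::'a) ^ q) ^ q = x"
  using pow_card[of x] cardU by (simp add: power2_eq_square power_mult)

lemma F_mem: "x \<in> F \<longleftrightarrow> x ^ q = x"
  by (simp add: subfield_q_def)

lemma F_0: "0 \<in> F" using q2 by (simp add: F_mem)
lemma F_1: "1 \<in> F" by (simp add: F_mem)
lemma F_add: "x \<in> F \<Longrightarrow> y \<in> F \<Longrightarrow> x + y \<in> F" by (simp add: F_mem frob_add)
lemma F_diff: "x \<in> F \<Longrightarrow> y \<in> F \<Longrightarrow> x - y \<in> F" by (simp add: F_mem frob_diff)
lemma F_mult: "x \<in> F \<Longrightarrow> y \<in> F \<Longrightarrow> x * y \<in> F" by (simp add: F_mem power_mult_distrib)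
lemma F_divide: "x \<in> F \<Longrightarrow> y \<in> F \<Longrightarrow> x / y \<in> F" by (simp add: F_mem power_divide)

lemma card_F: "card F = q"
proof (rule antisym)
  have "F = {x. x ^ q = 1 * x}" by (auto simp: F_mem)
  thus "card F \<le> q" using card_roots_le[OF q2, of 1] by simp
next
  define \<phi> where "\<phi> x = x ^ q - x" for x :: 'a
  have \<phi>_diff: "\<phi> (x - y) = \<phi> x - \<phi> y" for x y by (simp add: \<phi>_def frob_diff)
  have "range \<phi> \<subseteq> {y. y ^ q = (-1) * y}"
    by (auto simp: \<phi>_def frob_diff pow_qq)
  hence "card (range \<phi>) \<le> card {y. y ^ q = (-1::'a) * y}"
    by (intro card_mono) auto
  hence cim: "card (range \<phi>) \<le> q"
    using card_roots_le[OF q2, of "-1::'a"] by linarith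
  have fib: "card {x. \<phi> x = y} = card F" if yr: "y \<in> range \<phi>" for y
  proof -
    obtain x0 where y: "y = \<phi> x0" using yr by blast
    have "{x. \<phi> x = y} = (\<lambda>z. z + x0) ` F"
    proof (intro equalityI subsetI)
      fix x assume "x \<in> {x. \<phi> x = y}"
      hence "\<phi> (x - x0) = 0" using y \<phi>_diff by simp
      hence "x - x0 \<in> F" by (simp add: \<phi>_def F_mem)
      thus "x \<in> (\<lambda>z. z + x0) ` F" by (intro image_eqI[of _ _ "x - x0"]) auto
    next
      fix x assume "x \<in> (\<lambda>z. z + x0) ` F"
      then obtain z where z: "z \<in> F" "x = z + x0" by blast
      have "\<phi> (x - x0) = 0" using z by (simp add: \<phi>_def F_mem)
      thus "x \<in> {x. \<phi> x = y}" using y \<phi>_diff[of x x0] by simp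
    qed
    moreover have "inj_on (\<lambda>z. z + x0) F" by (auto simp: inj_on_def)
    ultimately show ?thesis by (simp add: card_image)
  qed
  have "UNIV = (\<Union>y\<in>range \<phi>. {x. \<phi> x = y})" by auto
  hence "card (UNIV :: 'a set) = card (\<Union>y\<in>range \<phi>. {x. \<phi> x = y})" by simp
  also have "\<dots> = (\<Sum>y\<in>range \<phi>. card {x. \<phi> x = y})"
    by (rule card_UN_disjoint) auto
  also have "\<dots> = card (range \<phi>) * card F" using fib by simp
  also have "\<dots> \<le> q * card F" using cim by simp
  finally have "q * q \<le> q * card F" using cardU by (simp add: power2_eq_square)
  thus "q \<le> card F" using q2 by simp
qed

lemma decomp_unique:
  assumes "a \<in> F" "b \<in> F" "a' \<in> F" "b' \<in> F" "a + b * \<xi> = a' + b' * \<xi>"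
  shows "a = a' \<and> b = b'"
proof (cases "b = b'")
  case True thus ?thesis using assms by simp
next
  case False
  have e: "(b' - b) * \<xi> = a - a'" using assms(5)
    by (metis add_diff_cancel_left add_diff_cancel_right left_diff_distrib)
  hence "\<xi> = (a - a') / (b' - b)" using False
    by (metis eq_iff_diff_eq_0 nonzero_mult_div_cancel_left)
  moreover have "(a - a') / (b' - b) \<in> F" using assms by (simp add: F_divide F_diff)
  ultimately show ?thesis using xi by simp
qed

lemma decomp_exists: "\<exists>a\<in>F. \<exists>b\<in>F. x = a + b * \<xi>"
proof -
  define h where "h = (\<lambda>p::'a \<times> 'a. fst p + snd p * \<xi>)"
  have inj: "inj_on h (F \<times> F)"
  proof (rule inj_onI)
    fix u v assume u: "u \<in> F \<times> F" and v: "v \<in> F \<times> F" and e: "h u = h v"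
    have "fst u = fst v \<and> snd u = snd v"
      using decomp_unique[of "fst u" "snd u" "fst v" "snd v"] u v e unfolding h_def
      by (simp add: mem_Times_iff)
    thus "u = v" by (simp add: prod_eq_iff)
  qed
  have "card (h ` (F \<times> F)) = card (F \<times> F)" by (rule card_image[OF inj])
  also have "\<dots> = card (UNIV :: 'a set)"
    using card_F cardU by (simp add: card_cartesian_product power2_eq_square)
  finally have "h ` (F \<times> F) = UNIV" by (rule card_eq_UNIV_imp_eq_UNIV[OF finite_UNIV])
  hence "x \<in> h ` (F \<times> F)" by (rule ssubst) (rule UNIV_I)
  then obtain u where "u \<in> F \<times> F" "x = h u" by (rule imageE)
  thus ?thesis unfolding h_def by (auto simp: mem_Times_iff)
qed

lemma coord_eq:
  assumes "a \<in> F" "b \<in> F" "x = a + b * \<xi>"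
  shows "coord0 q \<xi> x = a" "coord1 q \<xi> x = b"
proof -
  show "coord0 q \<xi> x = a" unfolding coord0_def
    by (rule the_equality) (use assms decomp_unique in blast)+
  show "coord1 q \<xi> x = b" unfolding coord1_def
    by (rule the_equality) (use assms decomp_unique in blast)+
qed

lemma coord_props:
  "coord0 q \<xi> x \<in> F" "coord1 q \<xi> x \<in> F" "x = coord0 q \<xi> x + coord1 q \<xi> x * \<xi>"
proof -
  obtain a b where ab: "a \<in> F" "b \<in> F" "x = a + b * \<xi>" using decomp_exists by blast
  show "coord0 q \<xi> x \<in> F" "coord1 q \<xi> x \<in> F" "x = coord0 q \<xi> x + coord1 q \<xi> x * \<xi>"
    using coord_eq[OF ab] ab by auto
qed

end


theorem proposition2p2:
  fixes f :: "'a::{field,finite} \<Rightarrow> 'a" and q :: nat and \<xi> \<theta> :: 'a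
  assumes "\<exists>p k. prime p \<and> k > 0 \<and> q = p ^ k"
    and "odd q"
    and "card (UNIV :: 'a set) = q ^ 2"
    and "\<xi> \<notin> subfield_q q"
    and "planar f"
    and "\<theta> \<noteq> 0"
    and "\<forall>c\<in>subfield_q q.
           card {x. coord1 q \<xi> \<theta> * coord0 q \<xi> (f x) - coord0 q \<xi> \<theta> * coord1 q \<xi> (f x) = c}
           = (if c \<noteq> 0 then q + 1 else 1)"
  shows "unital q f (U_theta q \<theta>) \<and>
         (\<forall>a b. tangent_line f (U_theta q \<theta>) (Lab a b) \<longleftrightarrow>
                coord0 q \<xi> b * coord1 q \<xi> \<theta> - coord1 q \<xi> b * coord0 q \<xi> \<theta> = 0)"
proof -
  interpret ffq q \<xi> using assms(1-4) by unfold_locales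
  define t0 where "t0 = coord0 q \<xi> \<theta>"
  define t1 where "t1 = coord1 q \<xi> \<theta>"
  define g where "g y = t1 * coord0 q \<xi> y - t0 * coord1 q \<xi> y" for y
  define U where "U = U_theta q \<theta>"
  have t0F: "t0 \<in> F" and t1F: "t1 \<in> F"
    using coord_props(1,2)[of \<theta>] by (auto simp: t0_def t1_def)
  have th: "\<theta> = t0 + t1 * \<xi>"
    unfolding t0_def t1_def by (rule coord_props(3))
  have gF: "g y \<in> F" for y
    unfolding g_def using coord_props(1,2)[of y] t0F t1F by (intro F_diff F_mult) auto
  have g_diff: "g (y - b) = g y - g b" for y b
  proof -
    have "y - b = (coord0 q \<xi> y + coord1 q \<xi> y * \<xi>) - (coord0 q \<xi> b + coord1 q \<xi> b * \<xi>)"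
      by (rule arg_cong2[where f="(-)"]) (rule coord_props(3), rule coord_props(3))
    also have "\<dots> = (coord0 q \<xi> y - coord0 q \<xi> b) + (coord1 q \<xi> y - coord1 q \<xi> b) * \<xi>"
      by (simp add: algebra_simps)
    finally have "y - b = (coord0 q \<xi> y - coord0 q \<xi> b) + (coord1 q \<xi> y - coord1 q \<xi> b) * \<xi>" .
    note dec = this
    have F1: "coord0 q \<xi> y - coord0 q \<xi> b \<in> F"
      by (intro F_diff coord_props(1))
    have F2: "coord1 q \<xi> y - coord1 q \<xi> b \<in> F"
      by (intro F_diff coord_props(2))
    have c01: "coord0 q \<xi> (y - b) = coord0 q \<xi> y - coord0 q \<xi> b"
      "coord1 q \<xi> (y - b) = coord1 q \<xi> y - coord1 q \<xi> b"
      using coord_eq[OF F1 F2 dec] by auto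
    show ?thesis unfolding g_def c01 by (simp add: algebra_simps)
  qed
  have K: "(\<exists>t\<in>F. y = t * \<theta>) \<longleftrightarrow> g y = 0" for y
  proof
    assume "\<exists>t\<in>F. y = t * \<theta>"
    then obtain t where t: "t \<in> F" "y = t * \<theta>" by blast
    have "y = t * t0 + (t * t1) * \<xi>" using t th by (simp add: algebra_simps)
    hence "coord0 q \<xi> y = t * t0" "coord1 q \<xi> y = t * t1"
      using coord_eq[of "t * t0" "t * t1" y] t t0F t1F F_mult by auto
    thus "g y = 0" unfolding g_def by (simp add: algebra_simps)
  next
    assume g0: "g y = 0"
    define y0 where "y0 = coord0 q \<xi> y"
    define y1 where "y1 = coord1 q \<xi> y"
    have y0F: "y0 \<in> F" and y1F: "y1 \<in> F"
      using coord_props(1,2)[of y] by (auto simp: y0_def y1_def)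
    have yy: "y = y0 + y1 * \<xi>"
      unfolding y0_def y1_def by (rule coord_props(3))
    have e: "t1 * y0 = t0 * y1" using g0 by (simp add: g_def y0_def y1_def)
    show "\<exists>t\<in>F. y = t * \<theta>"
    proof (cases "t1 = 0")
      case False
      have y0e: "y0 = y1 * t0 / t1" using e False by (simp add: field_simps)
      have "y = (y1 / t1) * \<theta>" using False y0e yy th
        by (simp add: field_simps)
      moreover have "y1 / t1 \<in> F" using y1F t1F F_divide by blast
      ultimately show ?thesis by blast
    next
      case True
      hence t00: "t0 \<noteq> 0" using th assms(6) by auto
      hence "y1 = 0" using e True by simp
      hence "y = (y0 / t0) * \<theta>" using t00 yy th True by simp
      moreover have "y0 / t0 \<in> F" using y0F t0F F_divide by blast
      ultimately show ?thesis by blast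
    qed
  qed
  have memA: "Aff x y \<in> U \<longleftrightarrow> g y = 0" for x y
    unfolding U_def U_theta_def K[symmetric] by auto
  have memI: "Ideal c \<notin> U" for c unfolding U_def U_theta_def by auto
  have memInf: "IdealInf \<in> U" unfolding U_def U_theta_def by auto
  have cardU: "card U = q ^ 3 + 1"
  proof -
    let ?img = "(\<lambda>(x, t). Aff x (t * \<theta>)) ` (UNIV \<times> F)"
    have Ueq: "U = insert IdealInf ?img"
      unfolding U_def U_theta_def by auto
    have inj: "inj_on (\<lambda>(x, t). Aff x (t * \<theta>)) (UNIV \<times> F)"
      using assms(6) by (auto simp: inj_on_def)
    have ni: "IdealInf \<notin> ?img" by auto
    have "card U = Suc (card ?img)" unfolding Ueq
      by (rule card_insert_disjoint[OF _ ni]) simp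
    also have "card ?img = card ((UNIV::'a set) \<times> F)" by (rule card_image[OF inj])
    finally have "card U = card ((UNIV::'a set) \<times> F) + 1" by simp
    also have "card ((UNIV::'a set) \<times> F) = card (UNIV :: 'a set) * card F"
      by (rule card_cartesian_product)
    also have "card (UNIV :: 'a set) * card F + 1 = q ^ 3 + 1"
      using card_F assms(3) by (simp add: power2_eq_square power3_eq_cube)
    finally show ?thesis .
  qed
  have linLab: "card (U \<inter> points_on f (Lab a b)) = (if g b \<noteq> 0 then q + 1 else 1)" for a b
  proof -
    have "U \<inter> points_on f (Lab a b) = (\<lambda>x. Aff x (f (x + a) - b)) ` {x. g (f (x + a) - b) = 0}"
    proof (rule Set.set_eqI)
      fix p show "p \<in> U \<inter> points_on f (Lab a b) \<longleftrightarrow>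
          p \<in> (\<lambda>x. Aff x (f (x + a) - b)) ` {x. g (f (x + a) - b) = 0}"
        by (cases p) (auto simp: points_on_def memA memI memInf)
    qed
    hence "card (U \<inter> points_on f (Lab a b)) = card {x. g (f (x + a) - b) = 0}"
      by (simp add: card_image inj_on_def)
    also have "{x. g (f (x + a) - b) = 0} = (\<lambda>x. x - a) ` {x. g (f x) = g b}"
    proof (intro equalityI subsetI)
      fix x assume "x \<in> {x. g (f (x + a) - b) = 0}"
      thus "x \<in> (\<lambda>x. x - a) ` {x. g (f x) = g b}"
        by (intro image_eqI[of _ _ "x + a"]) (auto simp: g_diff)
    qed (auto simp: g_diff)
    also have "card \<dots> = card {x. g (f x) = g b}"
      by (simp add: card_image inj_on_def)
    also have "\<dots> = (if g b \<noteq> 0 then q + 1 else 1)"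
      using assms(7) gF[of b] unfolding g_def t0_def t1_def by simp
    finally show ?thesis .
  qed
  have linNl: "card (U \<inter> points_on f (Nl a)) = q + 1" for a
  proof -
    have "U \<inter> points_on f (Nl a) = (\<lambda>t. Aff a (t * \<theta>)) ` F \<union> {IdealInf}"
    proof (rule Set.set_eqI)
      fix p show "p \<in> U \<inter> points_on f (Nl a) \<longleftrightarrow> p \<in> (\<lambda>t. Aff a (t * \<theta>)) ` F \<union> {IdealInf}"
        by (cases p) (auto simp: points_on_def memA memI memInf K[symmetric])
    qed
    moreover have "inj_on (\<lambda>t. Aff a (t * \<theta>)) F" using assms(6) by (auto simp: inj_on_def)
    moreover have "IdealInf \<notin> (\<lambda>t. Aff a (t * \<theta>)) ` F" by auto
    ultimately show ?thesis using card_F by (simp add: card_image card_insert_disjoint)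
  qed
  have linLinf: "card (U \<inter> points_on f Linf) = 1"
  proof -
    have "U \<inter> points_on f Linf = {IdealInf}"
    proof (rule Set.set_eqI)
      fix p show "p \<in> U \<inter> points_on f Linf \<longleftrightarrow> p \<in> {IdealInf}"
        by (cases p) (auto simp: points_on_def memI memInf)
    qed
    thus ?thesis by simp
  qed
  have uni: "unital q f U"
    unfolding unital_def
  proof (intro conjI allI)
    show "finite U" by (rule card_ge_0_finite) (simp add: cardU)
    show "card U = q ^ 3 + 1" by (rule cardU)
    fix l show "card (U \<inter> points_on f l) = 1 \<or> card (U \<inter> points_on f l) = q + 1"
      by (cases l) (auto simp: linLab linNl linLinf)
  qed
  have tang: "tangent_line f U (Lab a b) \<longleftrightarrow>
        coord0 q \<xi> b * coord1 q \<xi> \<theta> - coord1 q \<xi> b * coord0 q \<xi> \<theta> = 0" for a b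
  proof -
    have "coord0 q \<xi> b * coord1 q \<xi> \<theta> - coord1 q \<xi> b * coord0 q \<xi> \<theta> = g b"
      unfolding g_def t0_def t1_def by (simp add: mult.commute)
    moreover have "q + 1 \<noteq> 1" using q2 by simp
    ultimately show ?thesis unfolding tangent_line_def linLab by auto
  qed
  show ?thesis using uni tang unfolding U_def by blast
qed

end
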